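(* The reduction relation $\Rightarrow$ of Combinatory ReFLect (CR) is not strongly normalizing: there exists a well-typed CR term that has an infinite reduction sequence.
   Context: Combinatory ReFLect (CR) is defined as follows. Types: $\sigma ::= \mathsf{bool} \mid \mathsf{unit} \mid \mathsf{term} \mid \sigma_1 \to \sigma_2$. Terms: $e ::= \mathsf{I}_\sigma \mid \mathsf{K}_{\sigma,\tau} \mid \mathsf{S}_{\sigma,\tau,\upsilon} \mid \mathsf{value}_\sigma \mid \mathsf{lift} \mid \mathsf{app} \mid e_1\,e_2 \mid \ulcorner e\urcorner$, where $\sigma,\tau,\upsilon$ range over types and $\ulcorner e\urcorner$ is the quotation of $e$. Typing rules: $\mathsf{I}_\sigma:\sigma\to\sigma$; $\mathsf{K}_{\sigma,\tau}:\sigma\to\tau\to\sigma$; $\mathsf{S}_{\sigma,\tau,\upsilon}:(\sigma\to\tau\to\upsilon)\to(\sigma\to\tau)\to\sigma\to\upsilon$; $\mathsf{value}_\sigma:\mathsf{term}\to\sigma$; $\mathsf{lift}:\mathsf{term}\to\mathsf{term}$; $\mathsf{app}:\mathsf{term}\to\mathsf{term}\to\mathsf{term}$; if $e_1:\sigma\to\tau$ and $e_2:\sigma$ then $e_1\,e_2:\tau$; if $e:\sigma$ then $\ulcorner e\urcorner:\mathsf{term}$. The reduction relation $\Rightarrow$ is the reflexive, transitive, congruence closure of: $\mathsf{I}_\sigma\,e\Rightarrow e$; $\mathsf{K}_{\sigma,\tau}\,e_1\,e_2\Rightarrow e_1$; $\mathsf{S}_{\sigma,\tau,\upsilon}\,e_1\,e_2\,e_3\Rightarrow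 e_1\,e_3\,(e_2\,e_3)$; if $e:\sigma$ then $\mathsf{value}_\sigma\,\ulcorner e\urcorner\Rightarrow e$; $\mathsf{lift}\,\ulcorner s\urcorner\Rightarrow\ulcorner\ulcorner s\urcorner\urcorner$; if $e_1\,e_2$ is well typed then $\mathsf{app}\,\ulcorner e_1\urcorner\,\ulcorner e_2\urcorner\Rightarrow\ulcorner e_1\,e_2\urcorner$. (Application associates to the left.) *)

theory Defs
  imports Main
begin

datatype cty = TBool | TUnit | TTerm | TFun cty cty

text \<open>Terms of Combinatory ReFLect (Church style: combinators carry type annotations).\<close>
datatype ctm =
    CI cty
  | CK cty cty
  | CS cty cty cty
  | CValue cty
  | CLift
  | CAppC
  | CAp ctm ctm
  | CQuote ctm

inductive has_type :: "ctm \<Rightarrow> cty \<Rightarrow> bool" where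
  ty_I: "has_type (CI s) (TFun s s)"
| ty_K: "has_type (CK s t) (TFun s (TFun t s))"
| ty_S: "has_type (CS s t u)
           (TFun (TFun s (TFun t u)) (TFun (TFun s t) (TFun s u)))"
| ty_value: "has_type (CValue s) (TFun TTerm s)"
| ty_lift: "has_type CLift (TFun TTerm TTerm)"
| ty_app: "has_type CAppC (TFun TTerm (TFun TTerm TTerm))"
| ty_Ap: "has_type e1 (TFun s t) \<Longrightarrow> has_type e2 s \<Longrightarrow> has_type (CAp e1 e2) t"
| ty_Quote: "has_type e s \<Longrightarrow> has_type (CQuote e) TTerm"

definition well_typed :: "ctm \<Rightarrow> bool" where
  "well_typed e \<longleftrightarrow> (\<exists>s. has_type e s)"

text \<open>One-step reduction: the basic rules closed under all term constructors
  (congruence closure); the relation \<Rightarrow> of the paper is its reflexive-transitive closure.\<close>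
inductive step :: "ctm \<Rightarrow> ctm \<Rightarrow> bool" where
  r_I: "step (CAp (CI s) e) e"
| r_K: "step (CAp (CAp (CK s t) e1) e2) e1"
| r_S: "step (CAp (CAp (CAp (CS s t u) e1) e2) e3) (CAp (CAp e1 e3) (CAp e2 e3))"
| r_value: "has_type e s \<Longrightarrow> step (CAp (CValue s) (CQuote e)) e"
| r_lift: "step (CAp CLift (CQuote e)) (CQuote (CQuote e))"
| r_app: "well_typed (CAp e1 e2) \<Longrightarrow>
            step (CAp (CAp CAppC (CQuote e1)) (CQuote e2)) (CQuote (CAp e1 e2))"
| c_left: "step e1 e1' \<Longrightarrow> step (CAp e1 e2) (CAp e1' e2)"
| c_right: "step e2 e2' \<Longrightarrow> step (CAp e1 e2) (CAp e1 e2')"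
| c_quote: "step e e' \<Longrightarrow> step (CQuote e) (CQuote e')"

abbreviation reduces :: "ctm \<Rightarrow> ctm \<Rightarrow> bool" where
  "reduces \<equiv> step\<^sup>*\<^sup>*"

end

theory Submission
  imports Defs
begin

definition Wt :: ctm where
  "Wt = CAp (CAp (CS TTerm TTerm TTerm) CAppC) CLift"
definition Vt :: ctm where
  "Vt = CAp (CAp (CS TTerm TTerm TTerm) (CAp (CK (TFun TTerm TTerm) TTerm) (CValue TTerm))) Wt"

lemma tyW: "has_type Wt (TFun TTerm TTerm)"
  unfolding Wt_def by (meson has_type.intros)
lemma tyV: "has_type Vt (TFun TTerm TTerm)"
  unfolding Vt_def by (meson has_type.intros tyW)
lemma tyVq: "has_type (CAp Vt (CQuote Vt)) TTerm"
  by (meson has_type.intros tyV)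

definition cyc :: "ctm list" where
  "cyc = [CAp Vt (CQuote Vt),
          CAp (CAp (CAp (CK (TFun TTerm TTerm) TTerm) (CValue TTerm)) (CQuote Vt)) (CAp Wt (CQuote Vt)),
          CAp (CValue TTerm) (CAp Wt (CQuote Vt)),
          CAp (CValue TTerm) (CAp (CAp CAppC (CQuote Vt)) (CAp CLift (CQuote Vt))),
          CAp (CValue TTerm) (CAp (CAp CAppC (CQuote Vt)) (CQuote (CQuote Vt))),
          CAp (CValue TTerm) (CQuote (CAp Vt (CQuote Vt)))]"

lemma cyc_step: "i < 6 \<Longrightarrow> step (cyc ! i) (cyc ! ((i + 1) mod 6))"
proof -
  assume "i < 6"
  then consider "i = 0" | "i = 1" | "i = 2" | "i = 3" | "i = 4" | "i = 5" by linarith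
  then show ?thesis
  proof cases
    case 1 then show ?thesis unfolding cyc_def
      by (simp add: Vt_def step.r_S)
  next
    case 2 then show ?thesis unfolding cyc_def
      by (simp add: step.c_left step.r_K)
  next
    case 3 then show ?thesis unfolding cyc_def
      by (simp add: Wt_def step.c_right step.r_S)
  next
    case 4 then show ?thesis unfolding cyc_def
      by (simp add: step.c_right step.r_lift)
  next
    case 5 then show ?thesis unfolding cyc_def
      using 5 by (simp, intro step.c_right step.r_app, unfold well_typed_def, use tyVq in blast)
  next
    case 6 then show ?thesis unfolding cyc_def
      using tyVq 6 by (simp add: step.r_value)
  qed
qed

theorem theorem1:
  shows "\<exists>e (f :: nat \<Rightarrow> ctm). well_typed e \<and> f 0 = e \<and> (\<forall>n. step (f n) (f (Suc n)))"
proof (intro exI conjI allI)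
  show "well_typed (CAp Vt (CQuote Vt))" using tyVq well_typed_def by blast
  show "(\<lambda>n. cyc ! (n mod 6)) 0 = CAp Vt (CQuote Vt)" by (simp add: cyc_def)
  fix n
  have "Suc n mod 6 = (n mod 6 + 1) mod 6" by (simp add: mod_Suc_eq)
  then show "step ((\<lambda>n. cyc ! (n mod 6)) n) ((\<lambda>n. cyc ! (n mod 6)) (Suc n))"
    using cyc_step[of "n mod 6"] by simp
qed

end
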